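(* Let $n\ge 1$, $N=2^n$, and let $H$ be the $N\times N$ symmetric Toeplitz matrix with entries $H_{i,j}=a_{|i-j|}$ (indices $i,j\in\{0,\dots,N-1\}$). For $1\le k\le N-1$ define \[ M_k = a_k \sum_{i=0}^{N-1-k} \big(\ket{i}\bra{i+k} + \ket{i+k}\bra{i}\big). \] Let $k=2^m$ with $0\le m\le n-1$. Let $T_k = I^{\otimes (n-m-1)} \otimes X \otimes I^{\otimes m}$ (where $X$ is the Pauli $X$ matrix and $I$ the $2\times 2$ identity), let $P$ be the $N\times N$ permutation matrix (so $P^{-1}=P^T$) acting as the cyclic decrement $P\ket{i}=\ket{(i-1)\bmod N}$, and let $E_k$ be the $N\times N$ matrix obtained from $T_k$ by setting its bottom-right $2k\times 2k$ submatrix to zero, i.e. (with $0$-based indices) $(E_k)_{i,j}=(T_k)_{i,j}$ if $i< N-2k$ or $j< N-2k$, and $(E_k)_{i,j}=0$ if $i\ge N-2k$ and $j\ge N-2k$. Then \[ M_k = \begin{cases} a_k\left(T_k + P^{-k}E_kP^{k}\right) & \text{if } m<n-1,\\ a_k T_k & \text{if } m=n-1.\end{cases} \]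
   Context: Computational basis states $\ket{i}$, $i\in\{0,\dots,N-1\}$, of $n$ qubits are identified with $\ket{i_n i_{n-1}\cdots i_1}$ where $i=\sum_{l=1}^n i_l 2^{l-1}$, the leftmost tensor factor corresponding to the most significant bit $i_n$. Thus $T_k$ flips the bit of weight $2^m$. *)

theory Defs
  imports "Jordan_Normal_Form.Matrix"
begin

definition ketbra :: "nat \<Rightarrow> nat \<Rightarrow> nat \<Rightarrow> complex mat" where
  "ketbra N i j = mat N N (\<lambda>(r,c). if r = i \<and> c = j then 1 else 0)"

definition mat_sum_upto :: "nat \<Rightarrow> nat \<Rightarrow> (nat \<Rightarrow> complex mat) \<Rightarrow> complex mat" where
  "mat_sum_upto N r f = foldr (\<lambda>i acc. f i + acc) [0..<r] (0\<^sub>m N N)"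

definition Mk :: "nat \<Rightarrow> (nat \<Rightarrow> complex) \<Rightarrow> nat \<Rightarrow> complex mat" where
  "Mk n a k = a k \<cdot>\<^sub>m mat_sum_upto (2^n) (2^n - k)
      (\<lambda>i. ketbra (2^n) i (i+k) + ketbra (2^n) (i+k) i)"

(* Kronecker product; leftmost factor = most significant index digit *)
definition kron :: "complex mat \<Rightarrow> complex mat \<Rightarrow> complex mat" where
  "kron A B = mat (dim_row A * dim_row B) (dim_col A * dim_col B)
     (\<lambda>(i,j). A $$ (i div dim_row B, j div dim_col B) * B $$ (i mod dim_row B, j mod dim_col B))"

fun kron_pow :: "complex mat \<Rightarrow> nat \<Rightarrow> complex mat" where
  "kron_pow A 0 = 1\<^sub>m 1"
| "kron_pow A (Suc r) = kron A (kron_pow A r)"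

definition pauliX :: "complex mat" where
  "pauliX = mat 2 2 (\<lambda>(i,j). if i \<noteq> j then 1 else 0)"

definition id2 :: "complex mat" where
  "id2 = 1\<^sub>m 2"

definition Tk :: "nat \<Rightarrow> nat \<Rightarrow> complex mat" where
  "Tk n m = kron (kron (kron_pow id2 (n - m - 1)) pauliX) (kron_pow id2 m)"

definition Pdec :: "nat \<Rightarrow> complex mat" where
  "Pdec N = mat N N (\<lambda>(r,c). if int r = (int c - 1) mod int N then 1 else 0)"

definition Ek :: "nat \<Rightarrow> nat \<Rightarrow> complex mat" where
  "Ek n m = mat (2^n) (2^n) (\<lambda>(i,j).
     if i < 2^n - 2 * 2^m \<or> j < 2^n - 2 * 2^m then Tk n m $$ (i,j) else 0)"

end

theory Submission
  imports Defs
begin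

lemma par_iff: "((p::nat) div 2 = q div 2 \<and> p mod 2 \<noteq> q mod 2) \<longleftrightarrow> (q = p+1 \<and> even p) \<or> (p = q+1 \<and> even q)"
proof
  assume h: "p div 2 = q div 2 \<and> p mod 2 \<noteq> q mod 2"
  have p: "p = 2 * (p div 2) + p mod 2" and q: "q = 2 * (q div 2) + q mod 2" by simp_all
  have "p mod 2 < 2" "q mod 2 < 2" by simp_all
  then have "(p mod 2 = 0 \<and> q mod 2 = 1) \<or> (p mod 2 = 1 \<and> q mod 2 = 0)" using h by linarith
  then show "(q = p+1 \<and> even p) \<or> (p = q+1 \<and> even q)"
  proof
    assume a: "p mod 2 = 0 \<and> q mod 2 = 1"
    then have "q = p + 1" using p q h by linarith
    then show ?thesis using a by auto
  next
    assume a: "p mod 2 = 1 \<and> q mod 2 = 0"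
    then have "p = q + 1" using p q h by linarith
    then show ?thesis using a by auto
  qed
next
  assume "(q = p+1 \<and> even p) \<or> (p = q+1 \<and> even q)"
  then show "p div 2 = q div 2 \<and> p mod 2 \<noteq> q mod 2" by (auto elim!: evenE)
qed

lemma shift_iff:
  fixes r c K :: nat assumes K: "K > 0"
  shows "c = r + K \<longleftrightarrow> (c div K = r div K + 1 \<and> c mod K = r mod K)"
proof
  assume "c = r + K" then show "c div K = r div K + 1 \<and> c mod K = r mod K" using K by simp
next
  assume h: "c div K = r div K + 1 \<and> c mod K = r mod K"
  have "c = c div K * K + c mod K" by simp
  also have "\<dots> = (r div K + 1) * K + r mod K" using h by simp
  also have "\<dots> = (r div K * K + r mod K) + K" by (simp add: algebra_simps)
  also have "\<dots> = r + K" by simp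
  finally show "c = r + K" .
qed

lemma tk_iff:
  fixes r c K :: nat assumes K: "K > 0"
  shows "(r mod K = c mod K \<and> r div K div 2 = c div K div 2 \<and> r div K mod 2 \<noteq> c div K mod 2)
     \<longleftrightarrow> (c = r + K \<and> even (r div K)) \<or> (r = c + K \<and> even (c div K))"
  unfolding shift_iff[OF K, of c r] shift_iff[OF K, of r c]
  using par_iff[of "r div K" "c div K"] eq_commute[of "c mod K" "r mod K"] by blast

definition colperm :: "nat \<Rightarrow> (nat \<Rightarrow> nat) \<Rightarrow> complex mat" where
  "colperm N s = mat N N (\<lambda>(r,c). if r = s c then 1 else 0)"
definition rowperm :: "nat \<Rightarrow> (nat \<Rightarrow> nat) \<Rightarrow> complex mat" where
  "rowperm N s = mat N N (\<lambda>(r,c). if c = s r then 1 else 0)"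

lemma colperm_dim[simp]: "dim_row (colperm N s) = N" "dim_col (colperm N s) = N"
  by (simp_all add: colperm_def)
lemma rowperm_dim[simp]: "dim_row (rowperm N s) = N" "dim_col (rowperm N s) = N"
  by (simp_all add: rowperm_def)

lemma rowperm_carrier: "rowperm N s \<in> carrier_mat N N"
  unfolding carrier_mat_def by simp
lemma colperm_carrier: "colperm N s \<in> carrier_mat N N"
  unfolding carrier_mat_def by simp

lemma sum_delta_mult:
  assumes "j < (N::nat)"
  shows "(\<Sum>i\<in>{0..<N}. (f i :: complex) * (if i = j then 1 else 0)) = f j"
proof -
  have "(\<Sum>i\<in>{0..<N}. f i * (if i = j then 1 else 0)) = (\<Sum>i\<in>{0..<N}. if i = j then f i else 0)"
    by (rule sum.cong) auto
  also have "\<dots> = f j" using assms sum.delta[of "{0..<N}" j f] by simp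
  finally show ?thesis .
qed

lemma sum_delta_mult2:
  assumes "j < (N::nat)"
  shows "(\<Sum>i\<in>{0..<N}. (if i = j then 1 else 0) * (f i :: complex)) = f j"
  using sum_delta_mult[OF assms, of f] by (simp add: mult.commute)

lemma mult_colperm:
  assumes "dim_col B = N" "r < dim_row B" "c < N" "s c < N"
  shows "(B * colperm N s) $$ (r,c) = B $$ (r, s c)"
  using assms by (simp add: colperm_def scalar_prod_def sum_delta_mult)

lemma rowperm_mult:
  assumes "dim_row B = N" "r < N" "c < dim_col B" "s r < N"
  shows "(rowperm N s * B) $$ (r,c) = B $$ (s r, c)"
proof -
  have "(rowperm N s * B) $$ (r,c) = (\<Sum>i\<in>{0..<N}. (if i = s r then 1 else 0) * B $$ (i, c))"
    using assms by (simp add: rowperm_def scalar_prod_def)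
  also have "\<dots> = B $$ (s r, c)" using assms by (rule_tac sum_delta_mult2) auto
  finally show ?thesis .
qed

definition sh :: "nat \<Rightarrow> nat \<Rightarrow> nat \<Rightarrow> nat" where
  "sh N k x = nat ((int x - int k) mod int N)"

lemma sh_lt: "N > 0 \<Longrightarrow> sh N k x < N"
  unfolding sh_def by (simp add: nat_less_iff)

lemma sh_comp: "N > 0 \<Longrightarrow> sh N k (sh N 1 x) = sh N (Suc k) x"
  "N > 0 \<Longrightarrow> sh N 1 (sh N k x) = sh N (Suc k) x"
  unfolding sh_def by (simp_all add: mod_diff_left_eq algebra_simps)

lemma sh_comp1: "N > 0 \<Longrightarrow> sh N k (sh N (Suc 0) x) = sh N (Suc k) x"
  "N > 0 \<Longrightarrow> sh N (Suc 0) (sh N k x) = sh N (Suc k) x"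
  using sh_comp by simp_all

lemma sh0: "x < N \<Longrightarrow> sh N 0 x = x"
  unfolding sh_def by simp

lemma Pdec_colperm: "Pdec N = colperm N (sh N 1)"
  unfolding Pdec_def colperm_def sh_def
  by (rule eq_matI) auto

lemma PdecT_rowperm: "transpose_mat (Pdec N) = rowperm N (sh N 1)"
  unfolding Pdec_def rowperm_def sh_def
  by (rule eq_matI) auto

lemma Pdec_pow: "N > 0 \<Longrightarrow> Pdec N ^\<^sub>m k = colperm N (sh N k)"
proof (induction k)
  case 0
  show ?case unfolding Pdec_colperm by (rule eq_matI) (auto simp: colperm_def sh0)
next
  case (Suc k)
  have "Pdec N ^\<^sub>m Suc k = colperm N (sh N k) * colperm N (sh N 1)"
    using Suc by (simp add: Pdec_colperm)
  also have "\<dots> = colperm N (sh N (Suc k))"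
  proof (rule eq_matI)
    fix i j assume ij: "i < dim_row (colperm N (sh N (Suc k)))" "j < dim_col (colperm N (sh N (Suc k)))"
    have "(colperm N (sh N k) * colperm N (sh N 1)) $$ (i,j) = colperm N (sh N k) $$ (i, sh N 1 j)"
      using ij Suc.prems by (intro mult_colperm) (auto simp: sh_lt)
    also have "\<dots> = colperm N (sh N (Suc k)) $$ (i,j)"
      using ij Suc.prems by (simp add: colperm_def sh_lt sh_comp1)
    finally show "(colperm N (sh N k) * colperm N (sh N 1)) $$ (i,j) = colperm N (sh N (Suc k)) $$ (i,j)" .
  qed auto
  finally show ?case .
qed

lemma PdecT_pow: "N > 0 \<Longrightarrow> transpose_mat (Pdec N) ^\<^sub>m k = rowperm N (sh N k)"
proof (induction k)
  case 0
  show ?case unfolding PdecT_rowperm by (rule eq_matI) (auto simp: rowperm_def sh0)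
next
  case (Suc k)
  have "transpose_mat (Pdec N) ^\<^sub>m Suc k = rowperm N (sh N k) * rowperm N (sh N 1)"
    using Suc by (simp add: PdecT_rowperm)
  also have "\<dots> = rowperm N (sh N (Suc k))"
  proof (rule eq_matI)
    fix i j assume ij: "i < dim_row (rowperm N (sh N (Suc k)))" "j < dim_col (rowperm N (sh N (Suc k)))"
    have "(rowperm N (sh N k) * rowperm N (sh N 1)) $$ (i,j) = rowperm N (sh N 1) $$ (sh N k i, j)"
      using ij Suc.prems by (intro rowperm_mult) (auto simp: sh_lt)
    also have "\<dots> = rowperm N (sh N (Suc k)) $$ (i,j)"
      using ij Suc.prems by (simp add: rowperm_def sh_lt sh_comp1)
    finally show "(rowperm N (sh N k) * rowperm N (sh N 1)) $$ (i,j) = rowperm N (sh N (Suc k)) $$ (i,j)" .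
  qed auto
  finally show ?case .
qed

lemma conj_entry:
  assumes "N > 0" "dim_row E = N" "dim_col E = N" "r < N" "c < N"
  shows "(transpose_mat (Pdec N) ^\<^sub>m k * E * Pdec N ^\<^sub>m k) $$ (r,c) = E $$ (sh N k r, sh N k c)"
proof -
  have "(rowperm N (sh N k) * E * colperm N (sh N k)) $$ (r,c) = (rowperm N (sh N k) * E) $$ (r, sh N k c)"
    using assms by (intro mult_colperm) (auto simp: sh_lt)
  also have "\<dots> = E $$ (sh N k r, sh N k c)"
    using assms by (intro rowperm_mult) (auto simp: sh_lt)
  finally show ?thesis using assms by (simp add: PdecT_pow Pdec_pow)
qed

lemma sh_eq: "x < N \<Longrightarrow> K \<le> N \<Longrightarrow> sh N K x = (if K \<le> x then x - K else x + N - K)"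
proof (cases "K \<le> x")
  case True
  assume a: "x < N" "K \<le> N"
  then have "(int x - int K) mod int N = int x - int K" using True by (intro mod_pos_pos_trivial) auto
  then show ?thesis using True by (simp add: sh_def)
next
  case False
  assume a: "x < N" "K \<le> N"
  have "(int x - int K) mod int N = (int x - int K + int N) mod int N" by simp
  also have "\<dots> = int x - int K + int N" using False a by (intro mod_pos_pos_trivial) auto
  finally show ?thesis using False a by (simp add: sh_def nat_diff_distrib)
qed

lemma div_shift: "(K::nat) > 0 \<Longrightarrow> (i + K) div K = i div K + 1" by simp

lemma shift_one:
  fixes r c K N :: nat
  assumes K: "K > 0" and KN: "2 * K \<le> N" and r: "r < N" and c: "c < N"
  shows "((sh N K r < N - 2*K \<or> sh N K c < N - 2*K) \<and> sh N K c = sh N K r + K \<and> even (sh N K r div K))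
     \<longleftrightarrow> (c = r + K \<and> odd (r div K))"
proof
  assume h: "(sh N K r < N - 2*K \<or> sh N K c < N - 2*K) \<and> sh N K c = sh N K r + K \<and> even (sh N K r div K)"
  define i where "i = sh N K r"
  have hi: "i < N - 2*K" "sh N K c = i + K" "even (i div K)" using h unfolding i_def by auto
  have ri: "i = (if K \<le> r then r - K else r + N - K)" unfolding i_def using sh_eq[OF r] KN by simp
  have rK: "K \<le> r" using hi(1) ri K by (auto split: if_splits)
  then have ri2: "r = i + K" using ri by simp
  have cj: "sh N K c = (if K \<le> c then c - K else c + N - K)" using sh_eq[OF c] KN by simp
  have cK: "K \<le> c" using hi(1,2) cj K by (auto split: if_splits)
  then have "c = r + K" using hi(2) cj ri2 by simp
  moreover have "odd (r div K)" using ri2 hi(3) K by simp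
  ultimately show "c = r + K \<and> odd (r div K)" by simp
next
  assume h: "c = r + K \<and> odd (r div K)"
  have rK: "K \<le> r"
  proof (rule ccontr)
    assume "\<not> K \<le> r" then have "r div K = 0" by simp
    then show False using h by simp
  qed
  have si: "sh N K r = r - K" using sh_eq[OF r] KN rK by simp
  have sj: "sh N K c = r" using sh_eq[OF c] KN h by simp
  have "r = (r - K) + K" using rK by simp
  then have "r div K = (r - K) div K + 1" using K by (metis div_shift)
  then have "even ((r - K) div K)" using h by simp
  moreover have "r - K < N - 2*K" using h c rK by linarith
  ultimately show "(sh N K r < N - 2*K \<or> sh N K c < N - 2*K) \<and> sh N K c = sh N K r + K \<and> even (sh N K r div K)"
    using si sj rK by simp
qed

lemma foldr_sum_entry:
  assumes "\<And>i. f i \<in> carrier_mat N N"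
  shows "foldr (\<lambda>i acc. f i + acc) xs (0\<^sub>m N N) \<in> carrier_mat N N \<and>
    (\<forall>r c. r < N \<longrightarrow> c < N \<longrightarrow> foldr (\<lambda>i acc. f i + acc) xs (0\<^sub>m N N) $$ (r,c) = sum_list (map (\<lambda>i. f i $$ (r,c)) xs))"
proof (induction xs)
  case Nil then show ?case by simp
next
  case (Cons x xs)
  then show ?case using assms[of x] by auto
qed

lemma ketbra_carrier: "ketbra N i j \<in> carrier_mat N N" by (simp add: ketbra_def)

lemma Mk_dim: "Mk n a k \<in> carrier_mat (2^n) (2^n)"
  unfolding Mk_def mat_sum_upto_def
  using foldr_sum_entry[of "\<lambda>i. ketbra (2^n) i (i+k) + ketbra (2^n) (i+k) i" "2^n"]
  by (simp add: ketbra_carrier)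

lemma Mk_entry:
  assumes "r < 2^n" "c < 2^n" "k > 0"
  shows "Mk n a k $$ (r,c) = a k * ((if c = r + k then 1 else 0) + (if r = c + k then 1 else 0))"
proof -
  define N :: nat where "N = 2^n"
  have rc: "r < N" "c < N" using assms N_def by auto
  have ent: "mat_sum_upto N (N - k) (\<lambda>i. ketbra N i (i+k) + ketbra N (i+k) i) $$ (r,c)
     = (\<Sum>i\<in>{0..<N-k}. (if r = i \<and> c = i + k then 1 else 0) + (if r = i + k \<and> c = i then 1 else 0))"
    unfolding mat_sum_upto_def
    using foldr_sum_entry[of "\<lambda>i. ketbra N i (i+k) + ketbra N (i+k) i" N "[0..<N-k]"] rc
    by (simp add: ketbra_carrier ketbra_def sum_set_upt_conv_sum_list_nat[symmetric])
  have s1: "(\<Sum>i\<in>{0..<N-k}. (if r = i \<and> c = i + k then 1 else 0 :: complex)) = (if c = r + k then 1 else 0)"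
  proof -
    have "(\<Sum>i\<in>{0..<N-k}. (if r = i \<and> c = i + k then 1 else 0 :: complex))
        = (\<Sum>i\<in>{0..<N-k}. if i = r then (if c = r + k then 1 else 0) else 0)"
      by (rule sum.cong) auto
    also have "\<dots> = (if c = r + k then 1 else 0)"
      using rc by (auto simp: sum.delta)
    finally show ?thesis .
  qed
  have s2: "(\<Sum>i\<in>{0..<N-k}. (if r = i + k \<and> c = i then 1 else 0 :: complex)) = (if r = c + k then 1 else 0)"
  proof -
    have "(\<Sum>i\<in>{0..<N-k}. (if r = i + k \<and> c = i then 1 else 0 :: complex))
        = (\<Sum>i\<in>{0..<N-k}. if i = c then (if r = c + k then 1 else 0) else 0)"
      by (rule sum.cong) auto
    also have "\<dots> = (if r = c + k then 1 else 0)"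
      using rc by (auto simp: sum.delta)
    finally show ?thesis .
  qed
  have dimS: "mat_sum_upto N (N - k) (\<lambda>i. ketbra N i (i+k) + ketbra N (i+k) i) \<in> carrier_mat N N"
    unfolding mat_sum_upto_def
    using foldr_sum_entry[of "\<lambda>i. ketbra N i (i+k) + ketbra N (i+k) i" N "[0..<N-k]"]
    by (simp add: ketbra_carrier)
  have h1: "Mk n a k $$ (r,c) = a k * mat_sum_upto N (N - k) (\<lambda>i. ketbra N i (i+k) + ketbra N (i+k) i) $$ (r,c)"
    using dimS rc unfolding Mk_def N_def[symmetric] by simp
  show ?thesis
    by (subst h1, subst ent, subst sum.distrib, subst s1, subst s2) (rule refl)
qed

lemma kron_dim[simp]: "dim_row (kron A B) = dim_row A * dim_row B" "dim_col (kron A B) = dim_col A * dim_col B"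
  by (simp_all add: kron_def)

lemma kron_entry: "i < dim_row A * dim_row B \<Longrightarrow> j < dim_col A * dim_col B \<Longrightarrow>
  kron A B $$ (i,j) = A $$ (i div dim_row B, j div dim_col B) * B $$ (i mod dim_row B, j mod dim_col B)"
  by (simp add: kron_def)

lemma divmod_eq_iff: "(B::nat) > 0 \<Longrightarrow> (i div B = j div B \<and> i mod B = j mod B) \<longleftrightarrow> i = j"
  by (metis div_mult_mod_eq)

lemma kron_one: assumes "B > 0" shows "kron (1\<^sub>m A) (1\<^sub>m B) = 1\<^sub>m (A*B)"
proof (rule eq_matI)
  fix i j assume ij: "i < dim_row (1\<^sub>m (A*B) :: complex mat)" "j < dim_col (1\<^sub>m (A*B) :: complex mat)"
  then have ij2: "i < A * B" "j < A * B" by auto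
  have d: "i div B < A" "j div B < A" using ij2 assms by (simp_all add: less_mult_imp_div_less)
  have m: "i mod B < B" "j mod B < B" using assms by auto
  show "kron (1\<^sub>m A) (1\<^sub>m B) $$ (i,j) = 1\<^sub>m (A*B) $$ (i,j)"
    using ij2 d m divmod_eq_iff[OF assms, of i j] by (simp add: kron_entry) blast
qed simp_all

lemma kron_pow_id: "kron_pow id2 r = 1\<^sub>m (2^r)"
  by (induction r) (simp_all add: id2_def kron_one)

lemma pow_split: "m < n \<Longrightarrow> 2^(n-m-1) * 2 * 2^m = (2::nat)^n"
proof -
  assume "m < n"
  then have e: "n = (n - m - 1) + 1 + m" by arith
  have "2^(n-m-1) * 2 * 2^m = (2::nat)^((n - m - 1) + 1 + m)" by (simp add: power_add)
  also have "\<dots> = 2^n" using e[symmetric] by simp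
  finally show ?thesis .
qed

lemma Tk_dim:
  assumes "m < n" shows "Tk n m \<in> carrier_mat (2^n) (2^n)"
proof -
  have "dim_row (Tk n m) = 2^(n-m-1) * 2 * 2^m" "dim_col (Tk n m) = 2^(n-m-1) * 2 * 2^m"
    unfolding Tk_def kron_pow_id pauliX_def by simp_all
  then have "dim_row (Tk n m) = 2^n" "dim_col (Tk n m) = 2^n" unfolding pow_split[OF assms] by simp_all
  then show ?thesis by (intro carrier_matI)
qed

lemma Tk_entry:
  assumes "m < n" "r < 2^n" "c < 2^n"
  shows "Tk n m $$ (r,c) = (if (c = r + 2^m \<and> even (r div 2^m)) \<or> (r = c + 2^m \<and> even (c div 2^m)) then 1 else 0)"
proof -
  define A :: nat where "A = 2^(n-m-1)"
  define K :: nat where "K = 2^m"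
  have K: "K > 0" unfolding K_def by simp
  have N: "A * 2 * K = 2^n" unfolding A_def K_def by (rule pow_split[OF assms(1)])
  have rc: "r < A * 2 * K" "c < A * 2 * K" using assms N by auto
  have d: "r div K < A * 2" "c div K < A * 2" using rc K by (simp_all add: less_mult_imp_div_less)
  have d2: "r div K div 2 < A" "c div K div 2 < A" using d by (simp_all add: less_mult_imp_div_less)
  have "Tk n m $$ (r,c) = kron (kron (1\<^sub>m A) pauliX) (1\<^sub>m K) $$ (r,c)"
    unfolding Tk_def kron_pow_id A_def K_def ..
  also have "\<dots> = kron (1\<^sub>m A) pauliX $$ (r div K, c div K) * (if r mod K = c mod K then 1 else 0)"
    using rc K by (simp add: kron_entry pauliX_def)
  also have "\<dots> = (if r div K div 2 = c div K div 2 then 1 else 0) * (if r div K mod 2 \<noteq> c div K mod 2 then 1 else 0)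
       * (if r mod K = c mod K then 1 else 0)"
    using d d2 by (simp add: kron_entry pauliX_def)
  also have "\<dots> = (if (r mod K = c mod K \<and> r div K div 2 = c div K div 2 \<and> r div K mod 2 \<noteq> c div K mod 2) then 1 else 0)"
    by simp
  also have "\<dots> = (if (c = r + K \<and> even (r div K)) \<or> (r = c + K \<and> even (c div K)) then 1 else 0)"
    unfolding tk_iff[OF K] ..
  finally show ?thesis unfolding K_def .
qed

lemma Ek_dim: "Ek n m \<in> carrier_mat (2^n) (2^n)" by (simp add: Ek_def)

lemma Ek_entry: "i < 2^n \<Longrightarrow> j < 2^n \<Longrightarrow> Ek n m $$ (i,j) =
  (if i < 2^n - 2 * 2^m \<or> j < 2^n - 2 * 2^m then Tk n m $$ (i,j) else 0)"
  by (simp add: Ek_def)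

lemma ind_split:
  assumes "\<not> (U1 \<and> U2)"
  shows "(if U1 then 1 else 0) + (if U2 then 1 else 0) =
    (if (U1 \<and> e1) \<or> (U2 \<and> e2) then 1 else 0) + (if (U1 \<and> \<not> e1) \<or> (U2 \<and> \<not> e2) then 1 else (0::complex))"
  using assms by (cases U1; cases U2; cases e1; cases e2) auto

theorem theorem1:
  fixes n m k :: nat and a :: "nat \<Rightarrow> complex"
  assumes "n \<ge> 1" and "m \<le> n - 1" and "k = 2^m"
  shows "Mk n a k =
    (if m < n - 1
     then a k \<cdot>\<^sub>m (Tk n m + (transpose_mat (Pdec (2^n)) ^\<^sub>m k) * Ek n m * (Pdec (2^n) ^\<^sub>m k))
     else a k \<cdot>\<^sub>m Tk n m)"
proof -
  define N :: nat where "N = 2^n"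
  have mn: "m < n" using assms by linarith
  have K: "k > 0" using assms by simp
  have N0: "N > 0" unfolding N_def by simp
  have KN: "2 * k \<le> N"
  proof -
    have "2 * k = 2^(Suc m)" using assms by simp
    also have "\<dots> \<le> 2^n" using mn by (intro power_increasing) auto
    finally show ?thesis unfolding N_def .
  qed
  have Tc: "Tk n m \<in> carrier_mat N N" using Tk_dim[OF mn] N_def by simp
  have Ec: "Ek n m \<in> carrier_mat N N" using Ek_dim N_def by simp
  have TE: "\<And>r c. r < N \<Longrightarrow> c < N \<Longrightarrow> Tk n m $$ (r,c) =
     (if (c = r + k \<and> even (r div k)) \<or> (r = c + k \<and> even (c div k)) then 1 else 0)"
    using Tk_entry[OF mn] assms(3) N_def by simp
  have ME: "\<And>r c. r < N \<Longrightarrow> c < N \<Longrightarrow> Mk n a k $$ (r,c) = a k * ((if c = r + k then 1 else 0) + (if r = c + k then 1 else 0))"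
    using Mk_entry K N_def by simp
  have Mc: "Mk n a k \<in> carrier_mat N N" using Mk_dim N_def by simp
  have dT0: "dim_row (Tk n m) = N" "dim_col (Tk n m) = N" using carrier_matD[OF Tc] by simp_all
  show ?thesis
  proof (cases "m < n - 1")
    case True
    define Q where "Q = transpose_mat (Pdec N) ^\<^sub>m k * Ek n m * Pdec N ^\<^sub>m k"
    have Qeq: "Q = rowperm N (sh N k) * Ek n m * colperm N (sh N k)"
      unfolding Q_def by (simp only: PdecT_pow[OF N0] Pdec_pow[OF N0])
    have Qc: "Q \<in> carrier_mat N N" unfolding Qeq
      by (rule mult_carrier_mat[OF mult_carrier_mat[OF rowperm_carrier Ec] colperm_carrier])
    have dQ: "dim_row Q = N" "dim_col Q = N" using carrier_matD[OF Qc] by simp_all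
    have dT: "dim_row (Tk n m) = N" "dim_col (Tk n m) = N" using carrier_matD[OF Tc] by simp_all
    have "Mk n a k = a k \<cdot>\<^sub>m (Tk n m + Q)"
    proof (rule eq_matI)
      fix r c assume rc0: "r < dim_row (a k \<cdot>\<^sub>m (Tk n m + Q))" "c < dim_col (a k \<cdot>\<^sub>m (Tk n m + Q))"
      then have rc: "r < N" "c < N" using dQ by simp_all
      define i where "i = sh N k r"
      define j where "j = sh N k c"
      have ij: "i < N" "j < N" unfolding i_def j_def using sh_lt N0 by auto
      have Qe: "Q $$ (r,c) = Ek n m $$ (i, j)"
        unfolding i_def j_def Q_def using conj_entry[OF N0 _ _ rc, of "Ek n m" k] carrier_matD[OF Ec] by simp
      have Ee: "Ek n m $$ (i,j) = (if i < N - 2 * k \<or> j < N - 2 * k then Tk n m $$ (i,j) else 0)"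
        using Ek_entry[of i n j m] ij assms(3) N_def by simp
      have s1: "((i < N - 2*k \<or> j < N - 2*k) \<and> j = i + k \<and> even (i div k)) \<longleftrightarrow> (c = r + k \<and> odd (r div k))"
        unfolding i_def j_def by (rule shift_one[OF K KN rc])
      have s2: "((j < N - 2*k \<or> i < N - 2*k) \<and> i = j + k \<and> even (j div k)) \<longleftrightarrow> (r = c + k \<and> odd (c div k))"
        unfolding i_def j_def by (rule shift_one[OF K KN rc(2) rc(1)])
      have Ev: "Ek n m $$ (i,j) = (if (c = r + k \<and> odd (r div k)) \<or> (r = c + k \<and> odd (c div k)) then 1 else 0)"
        unfolding Ee TE[OF ij] using s1 s2 by auto
      have "(a k \<cdot>\<^sub>m (Tk n m + Q)) $$ (r,c) = a k * (Tk n m $$ (r,c) + Q $$ (r,c))"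
        using rc dQ dT by simp
      also have "\<dots> = a k * ((if c = r + k then 1 else 0) + (if r = c + k then 1 else 0))"
        unfolding Qe Ev TE[OF rc] using ind_split[of "c = r + k" "r = c + k" "even (r div k)" "even (c div k)"] K
        by simp
      finally show "Mk n a k $$ (r,c) = (a k \<cdot>\<^sub>m (Tk n m + Q)) $$ (r,c)" using ME rc by simp
    qed (use Mc dQ in simp_all)
    then show ?thesis using True unfolding Q_def N_def by simp
  next
    case False
    then have mn1: "m = n - 1" using mn by simp
    have nS: "n = Suc m" using mn1 assms(1) by simp
    have NK: "N = 2 * k" unfolding N_def nS assms(3) by simp
    have "Mk n a k = a k \<cdot>\<^sub>m Tk n m"
    proof (rule eq_matI)
      fix r c assume rc0: "r < dim_row (a k \<cdot>\<^sub>m Tk n m)" "c < dim_col (a k \<cdot>\<^sub>m Tk n m)"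
      then have rc: "r < N" "c < N" using dT0 by simp_all
      have e1: "c = r + k \<Longrightarrow> even (r div k)" using rc NK by simp
      have e2: "r = c + k \<Longrightarrow> even (c div k)" using rc NK by simp
      have "(a k \<cdot>\<^sub>m Tk n m) $$ (r,c) = a k * ((if c = r + k then 1 else 0) + (if r = c + k then 1 else 0))"
        using rc dT0 TE[OF rc] e1 e2 K by auto
      then show "Mk n a k $$ (r,c) = (a k \<cdot>\<^sub>m Tk n m) $$ (r,c)" using ME rc by simp
    qed (use Mc dT0 in simp_all)
    then show ?thesis using False by simp
  qed
qed

end
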